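(* Let $(P_n)_{n\ge0}$ be defined by $P_0(m)=m$ and $P_{n+1}(m)=P_n(m+1)+\sum_{i=0}^{n}P_i(m)P_{n-i}(m)$, and write $P_n(m)=\sum_{i=1}^{n+2}p^{(i)}_n m^{n+2-i}$, with $p^{(i)}_n=0$ for $i>n+2$. For every integer $i\ge 1$ let $a_i(z)=\sum_{n\ge 0}p^{(i)}_n z^n$ (a formal power series). Then the following equations hold: \[a_1=z a_1^2+1,\qquad a_1(0)=1,\] \[a_2=z a_1+2z a_1 a_2,\] and for every $i>2$, \[a_i=z^{i-1}\frac{a_1^{(i-2)}}{(i-2)!}+z^{i-2}\frac{a_1^{(i-3)}}{(i-3)!}+z^{i-2}\frac{a_2^{(i-3)}}{(i-3)!} +z\sum_{j=1}^{i-3}\sum_{k=0}^{i-3-j}(-1)^k\binom{k+j-1}{j-1}z^{i-3-j-k}\frac{a_{j+2}^{(i-3-j-k)}}{(i-3-j-k)!} +z\sum_{j=1}^{i}a_j\,a_{i-j+1}.\]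
   Context: $f^{(k)}$ denotes the $k$-th (formal) derivative of $f$ with respect to $z$, $f^{(0)}=f$. The coefficient $p^{(i)}_n$ is the $i$-th leading coefficient of $P_n$ (which has degree $n+1$); equivalently $p^{(i)}_n=c_{n,n+2-i}$, the number of $(n+2-i)$-contexts of size $n$. *)

theory Defs
  imports "HOL-Computational_Algebra.Computational_Algebra"
begin

fun Pn :: "nat \<Rightarrow> int poly" where
  "Pn 0 = [:0, 1:]"
| "Pn (Suc n) = pcompose (Pn n) [:1, 1:] + (\<Sum>i\<le>n. Pn i * Pn (n - i))"

definition pc :: "nat \<Rightarrow> nat \<Rightarrow> int" where
  "pc i n = (if 1 \<le> i \<and> i \<le> n + 2 then coeff (Pn n) (n + 2 - i) else 0)"

definition a :: "nat \<Rightarrow> rat fps" where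
  "a i = Abs_fps (\<lambda>n. of_int (pc i n))"

end

theory Submission
  imports Defs
begin

lemma pcompose_monom_aux: "pcompose (monom c l) q = smult c (q ^ l)"
  by (induction l) (auto simp: monom_Suc pcompose_pCons monom_0)

lemma coeff_lin_pow: "coeff ([:1, 1:] ^ l) e = (of_nat (l choose e) :: 'a::comm_semiring_1)"
proof (cases "e \<le> l")
  case True then show ?thesis using coeff_linear_poly_power[of e l 1 1] by simp
next
  case False
  then have "degree ([:1::'a, 1:] ^ l) < e"
    using False by (simp add: degree_linear_power)
  then show ?thesis using False by (simp add: coeff_eq_0 binomial_eq_0)
qed

lemma coeff_shift: fixes p :: "int poly" shows "coeff (pcompose p [:1, 1:]) e = (\<Sum>l\<le>degree p. coeff p l * of_nat (l choose e))"
proof -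
  have "pcompose p [:1,1:] = (\<Sum>l\<le>degree p. pcompose (monom (coeff p l) l) [:1,1:])"
    by (subst (1) poly_as_sum_of_monoms[symmetric]) (simp add: pcompose_sum)
  also have "\<dots> = (\<Sum>l\<le>degree p. smult (coeff p l) ([:1,1:]^l))"
    by (intro sum.cong refl pcompose_monom_aux)
  finally have "coeff (pcompose p [:1,1:]) e = (\<Sum>l\<le>degree p. coeff (smult (coeff p l) ([:1,1:]^l)) e)"
    by (simp only: coeff_sum)
  also have "\<dots> = (\<Sum>l\<le>degree p. coeff p l * of_nat (l choose e))"
    by (intro sum.cong refl) (simp only: coeff_smult coeff_lin_pow)
  finally show ?thesis .
qed

lemma deg_Pn: "degree (Pn n) \<le> n + 1"
proof (induction n rule: less_induct)
  case (less n)
  show ?case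
  proof (cases n)
    case 0 then show ?thesis by simp
  next
    case (Suc m)
    have d1: "degree (pcompose (Pn m) [:1,1:]) \<le> m + 1"
      using degree_pcompose_le[of "Pn m" "[:1,1:]"] less[of m] Suc by simp
    have d2: "degree (\<Sum>i\<le>m. Pn i * Pn (m - i)) \<le> Suc m + 1"
    proof (rule degree_sum_le)
      fix i assume "i \<in> {..m}"
      then have "i < n" "m - i < n" using Suc by auto
      then have "degree (Pn i) \<le> i + 1" "degree (Pn (m-i)) \<le> m - i + 1" using less by auto
      then show "degree (Pn i * Pn (m - i)) \<le> Suc m + 1"
        using degree_mult_le[of "Pn i" "Pn (m-i)"] \<open>i \<in> {..m}\<close> by auto
    qed simp
    have "degree (Pn n) \<le> max (degree (pcompose (Pn m) [:1,1:])) (degree (\<Sum>i\<le>m. Pn i * Pn (m - i)))"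
      unfolding Suc Pn.simps by (rule degree_add_le_max)
    moreover have "max (degree (pcompose (Pn m) [:1,1:])) (degree (\<Sum>i\<le>m. Pn i * Pn (m - i))) \<le> n + 1"
      using d1 d2 unfolding Suc by (intro max.boundedI) linarith+
    ultimately show ?thesis by (rule order_trans)
  qed
qed


lemma coeff_high: "n + 1 < l \<Longrightarrow> coeff (Pn n) l = 0"
  using deg_Pn[of n] by (intro coeff_eq_0) linarith

lemma coeff_nz: "coeff (Pn n) l \<noteq> 0 \<Longrightarrow> l \<le> n + 1"
  using coeff_high[of n l] by linarith

lemma pc_eq: "1 \<le> i \<Longrightarrow> i \<le> n + 2 \<Longrightarrow> pc i n = coeff (Pn n) (n + 2 - i)"
  by (simp add: pc_def)

lemma pc_zero: "i = 0 \<or> n + 2 < i \<Longrightarrow> pc i n = 0"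
  by (auto simp: pc_def)

lemma partA:
  assumes i1: "1 \<le> i" and i2: "i \<le> n + 3"
  shows "coeff (pcompose (Pn n) [:1,1:]) (n + 3 - i)
     = (\<Sum>i'=1..i-1. int ((n + 2 - i') choose (i - 1 - i')) * pc i' n)"
proof -
  define e where "e = n + 3 - i"
  have "coeff (pcompose (Pn n) [:1,1:]) e = (\<Sum>l\<le>degree (Pn n). coeff (Pn n) l * int (l choose e))"
    by (rule coeff_shift)
  also have "\<dots> = (\<Sum>l\<le>n+1. coeff (Pn n) l * int (l choose e))"
    by (rule sum.mono_neutral_left) (use deg_Pn[of n] in \<open>auto intro!: coeff_eq_0\<close>)
  also have "\<dots> = (\<Sum>l\<in>{l. e \<le> l \<and> l \<le> n+1}. coeff (Pn n) l * int (l choose e))"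
    by (rule sum.mono_neutral_right) auto
  also have "\<dots> = (\<Sum>i'=1..i-1. int ((n + 2 - i') choose (i - 1 - i')) * pc i' n)"
  proof (rule sum.reindex_bij_witness_not_neutral[where S'="{}" and T'="{i'\<in>{1..i-1}. n + 2 < i'}"
        and j="\<lambda>l. n + 2 - l" and i="\<lambda>b. n + 2 - b"])
    fix l assume l: "l \<in> {l. e \<le> l \<and> l \<le> n+1}"
    then have "pc (n + 2 - l) n = coeff (Pn n) l"
      by (subst pc_eq) (auto simp: e_def)
    moreover have "(n + 2 - (n + 2 - l)) choose (i - 1 - (n + 2 - l)) = l choose e"
    proof -
      have "n + 2 - (n + 2 - l) = l" using l by auto
      moreover have "i - 1 - (n + 2 - l) = l - e" using l i1 i2 by (auto simp: e_def)
      moreover have "l choose (l - e) = l choose e" using l by (intro binomial_symmetric[symmetric]) auto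
      ultimately show ?thesis by simp
    qed
    ultimately show "int ((n + 2 - (n + 2 - l)) choose (i - 1 - (n + 2 - l))) * pc (n + 2 - l) n
        = coeff (Pn n) l * int (l choose e)" by simp
  qed (use i1 i2 in \<open>auto simp: e_def pc_zero\<close>)
  finally show ?thesis by (simp add: e_def)
qed

lemma partB:
  assumes i1: "1 \<le> i" and i2: "i \<le> n + 3" and t: "t \<le> n"
  shows "coeff (Pn t * Pn (n - t)) (n + 3 - i)
     = (\<Sum>i1=1..i. pc i1 t * pc (i + 1 - i1) (n - t))"
proof -
  define e where "e = n + 3 - i"
  define s where "s = n - t"
  have "coeff (Pn t * Pn s) e = (\<Sum>x\<le>e. coeff (Pn t) x * coeff (Pn s) (e - x))"
    by (rule coeff_mult)
  also have "\<dots> = (\<Sum>x\<in>{x. x \<le> e \<and> x \<le> t + 1 \<and> e - x \<le> s + 1}. coeff (Pn t) x * coeff (Pn s) (e - x))"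
    by (rule sum.mono_neutral_right) (auto dest: coeff_nz)
  also have "\<dots> = (\<Sum>i1=1..i. pc i1 t * pc (i + 1 - i1) s)"
  proof (rule sum.reindex_bij_witness_not_neutral[where S'="{}"
        and T'="{i1\<in>{1..i}. t + 2 < i1 \<or> s + 2 < i + 1 - i1}"
        and j="\<lambda>x. t + 2 - x" and i="\<lambda>b. t + 2 - b"])
    fix x assume x: "x \<in> {x. x \<le> e \<and> x \<le> t + 1 \<and> e - x \<le> s + 1}"
    have "pc (t + 2 - x) t = coeff (Pn t) x"
      using x by (subst pc_eq) auto
    moreover have "pc (i + 1 - (t + 2 - x)) s = coeff (Pn s) (e - x)"
    proof -
      have "s + 2 - (i + 1 - (t + 2 - x)) = e - x" using x i1 i2 t by (auto simp: e_def s_def)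
      moreover have "1 \<le> i + 1 - (t + 2 - x)" "i + 1 - (t + 2 - x) \<le> s + 2"
        using x i1 i2 t by (auto simp: e_def s_def)
      ultimately show ?thesis by (simp add: pc_eq)
    qed
    ultimately show "pc (t + 2 - x) t * pc (i + 1 - (t + 2 - x)) s = coeff (Pn t) x * coeff (Pn s) (e - x)"
      by simp
  qed (use i1 i2 t in \<open>auto simp: e_def s_def pc_zero\<close>)
  finally show ?thesis by (simp add: e_def s_def)
qed


lemma rec_pc:
  "pc i (Suc n) = (\<Sum>i'=1..i-1. int ((n + 2 - i') choose (i - 1 - i')) * pc i' n)
     + (\<Sum>t\<le>n. \<Sum>i1=1..i. pc i1 t * pc (i + 1 - i1) (n - t))"
proof -
  consider "i = 0" | "n + 3 < i" | "1 \<le> i \<and> i \<le> n + 3" by linarith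
  then show ?thesis
  proof cases
    case 1 then show ?thesis by (simp add: pc_zero)
  next
    case 2
    have l: "pc i (Suc n) = 0" using 2 by (intro pc_zero) simp
    have s1: "(\<Sum>i'=1..i-1. int ((n + 2 - i') choose (i - 1 - i')) * pc i' n) = 0"
    proof (rule sum.neutral, rule ballI)
      fix i' assume "i' \<in> {1..i-1}"
      show "int ((n + 2 - i') choose (i - 1 - i')) * pc i' n = 0"
      proof (cases "i' \<le> n + 2")
        case True then have "(n + 2 - i') choose (i - 1 - i') = 0" using 2 by (intro binomial_eq_0) linarith
        then show ?thesis by simp
      next
        case False then show ?thesis by (simp add: pc_zero)
      qed
    qed
    have s2: "(\<Sum>t\<le>n. \<Sum>i1=1..i. pc i1 t * pc (i + 1 - i1) (n - t)) = 0"
    proof (intro sum.neutral ballI)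
      fix t i1 assume t: "t \<in> {..n}" and "i1 \<in> {1..i}"
      show "pc i1 t * pc (i + 1 - i1) (n - t) = 0"
      proof (cases "i1 \<le> t + 2")
        case True then have "pc (i + 1 - i1) (n - t) = 0" using 2 t by (intro pc_zero) auto
        then show ?thesis by simp
      next
        case False then show ?thesis by (simp add: pc_zero)
      qed
    qed
    show ?thesis using l s1 s2 by simp
  next
    case 3
    have "pc i (Suc n) = coeff (Pn (Suc n)) (n + 3 - i)"
      using 3 by (subst pc_eq) (auto simp: eval_nat_numeral)
    also have "\<dots> = coeff (pcompose (Pn n) [:1,1:]) (n + 3 - i)
        + (\<Sum>t\<le>n. coeff (Pn t * Pn (n - t)) (n + 3 - i))"
      by (simp only: Pn.simps coeff_add coeff_sum)
    also have "\<dots> = (\<Sum>i'=1..i-1. int ((n + 2 - i') choose (i - 1 - i')) * pc i' n)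
     + (\<Sum>t\<le>n. \<Sum>i1=1..i. pc i1 t * pc (i + 1 - i1) (n - t))"
      using 3 by (simp add: partA partB)
    finally show ?thesis .
  qed
qed

lemma a_nth: "a i $ n = of_int (pc i n)"
  by (simp add: a_def)

lemma rec_a:
  "a i $ Suc n = (\<Sum>i'=1..i-1. of_nat ((n + 2 - i') choose (i - 1 - i')) * a i' $ n)
     + (\<Sum>j=1..i. a j * a (i + 1 - j)) $ n"
proof -
  have "(\<Sum>j=1..i. a j * a (i + 1 - j)) $ n = (\<Sum>j=1..i. \<Sum>t=0..n. a j $ t * a (i + 1 - j) $ (n - t))"
    by (simp add: fps_sum_nth fps_mult_nth)
  also have "\<dots> = (\<Sum>t\<le>n. \<Sum>j=1..i. a j $ t * a (i + 1 - j) $ (n - t))"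
    by (subst sum.swap) (simp add: atLeast0AtMost)
  finally have p: "(\<Sum>j=1..i. a j * a (i + 1 - j)) $ n = of_int (\<Sum>t\<le>n. \<Sum>i1=1..i. pc i1 t * pc (i + 1 - i1) (n - t))"
    by (simp add: a_nth)
  show ?thesis
    by (subst p, subst a_nth, subst rec_pc) (simp add: a_nth)
qed



lemma F1: "1 \<le> N \<Longrightarrow> int ((N - 1) choose d) = (\<Sum>k\<le>d. (-1)^k * int (N choose (d - k)))"
proof (induction d)
  case 0 then show ?case by simp
next
  case (Suc d)
  obtain M where N: "N = Suc M" using Suc.prems by (cases N) auto
  have "(\<Sum>k\<le>Suc d. (-1)^k * int (N choose (Suc d - k)))
      = int (N choose Suc d) + (\<Sum>k\<le>d. (-1)^(Suc k) * int (N choose (Suc d - Suc k)))"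
    by (subst sum.atMost_Suc_shift) simp
  also have "(\<Sum>k\<le>d. (-1)^(Suc k) * int (N choose (Suc d - Suc k))) = - (\<Sum>k\<le>d. (-1)^k * int (N choose (d - k)))"
    by (simp add: sum_negf)
  also have "(\<Sum>k\<le>d. (-1)^k * int (N choose (d - k))) = int ((N - 1) choose d)"
    using Suc by simp
  finally show ?case by (simp add: N)
qed

lemma Fj: "Suc j \<le> N \<Longrightarrow> int ((N - Suc j) choose d) = (\<Sum>k\<le>d. (-1)^k * int ((k + j) choose j) * int (N choose (d - k)))"
proof (induction j arbitrary: d)
  case 0 then show ?case using F1[of N d] by simp
next
  case (Suc j)
  note outer = Suc.IH
  show ?case using Suc.prems
  proof (induction d)
    case 0 then show ?case by simp
  next
    case (Suc d)
    define g where "g k = (-1)^k * int ((k + Suc j) choose Suc j) * int (N choose (Suc d - k))" for k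
    have "(\<Sum>k\<le>Suc d. g k) = g 0 + (\<Sum>k\<le>d. g (Suc k))"
      by (rule sum.atMost_Suc_shift)
    also have "(\<Sum>k\<le>d. g (Suc k)) = (\<Sum>k\<le>d. (-1)^(Suc k) * int ((Suc k + j) choose j) * int (N choose (Suc d - Suc k)))
       - (\<Sum>k\<le>d. (-1)^k * int ((k + Suc j) choose Suc j) * int (N choose (d - k)))"
    proof -
      have pas: "(Suc k + Suc j) choose Suc j = ((Suc k + j) choose j) + ((k + Suc j) choose Suc j)" for k
      proof -
        have "(Suc k + Suc j) choose Suc j = ((k + Suc j) choose j) + ((k + Suc j) choose Suc j)"
          by (simp only: add_Suc binomial_Suc_Suc)
        moreover have "k + Suc j = Suc k + j" by simp
        ultimately show ?thesis by (simp only:)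
      qed
      have "g (Suc k) = (-1)^(Suc k) * int ((Suc k + j) choose j) * int (N choose (Suc d - Suc k))
          - (-1)^k * int ((k + Suc j) choose Suc j) * int (N choose (d - k))" for k
        unfolding g_def pas by (simp add: algebra_simps del: binomial_Suc_Suc)
      then show ?thesis by (simp only: sum_subtractf)
    qed
    also have "g 0 + ((\<Sum>k\<le>d. (-1)^(Suc k) * int ((Suc k + j) choose j) * int (N choose (Suc d - Suc k)))
       - (\<Sum>k\<le>d. (-1)^k * int ((k + Suc j) choose Suc j) * int (N choose (d - k))))
       = (\<Sum>k\<le>Suc d. (-1)^k * int ((k + j) choose j) * int (N choose (Suc d - k)))
       - (\<Sum>k\<le>d. (-1)^k * int ((k + Suc j) choose Suc j) * int (N choose (d - k)))"
      unfolding sum.atMost_Suc_shift[of _ d] by (simp add: g_def)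
    also have "\<dots> = int ((N - Suc j) choose Suc d) - int ((N - Suc (Suc j)) choose d)"
      using outer[of "Suc d"] Suc by simp
    also have "\<dots> = int ((N - Suc (Suc j)) choose Suc d)"
    proof -
      have "N - Suc j = Suc (N - Suc (Suc j))" using Suc.prems by simp
      then show ?thesis by simp
    qed
    finally show ?case by (simp add: g_def)
  qed
qed



lemma deriv_nth: "((fps_deriv ^^ k) (f :: rat fps)) $ n = pochhammer (of_nat n + 1) k * f $ (n + k)"
proof (induction k arbitrary: n)
  case 0 then show ?case by simp
next
  case (Suc k)
  have "((fps_deriv ^^ Suc k) f) $ n = of_nat (n + 1) * ((fps_deriv ^^ k) f) $ (n + 1)"
    by simp
  also have "\<dots> = of_nat (n + 1) * (pochhammer (of_nat (n + 1) + 1) k * f $ (n + 1 + k))"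
    by (simp only: Suc)
  also have "\<dots> = pochhammer (of_nat n + 1) (Suc k) * f $ (n + Suc k)"
    by (simp add: pochhammer_rec add_ac)
  finally show ?case .
qed

lemma L0: "(fps_X ^ k * fps_const (1 / fact k) * (fps_deriv ^^ k) (f :: rat fps)) $ N = of_nat (N choose k) * f $ N"
proof -
  have "(fps_X ^ k * fps_const (1 / fact k) * (fps_deriv ^^ k) f) $ N
     = (fps_X ^ k * (fps_const (1 / fact k) * (fps_deriv ^^ k) f)) $ N"
    by (simp only: mult.assoc)
  also have "\<dots> = (if N < k then 0 else (1 / fact k) * (pochhammer (of_nat (N - k) + 1) k * f $ (N - k + k)))"
    by (simp add: fps_X_power_mult_nth deriv_nth)
  also have "\<dots> = of_nat (N choose k) * f $ N"
  proof (cases "N < k")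
    case True then show ?thesis by (simp add: binomial_eq_0)
  next
    case False
    have "(of_nat (N choose k) :: rat) = of_nat N gchoose k" by (simp add: binomial_gbinomial)
    also have "\<dots> = pochhammer (of_nat N - of_nat k + 1) k / fact k" by (rule gbinomial_pochhammer')
    also have "of_nat N - of_nat k = (of_nat (N - k) :: rat)" using False by (simp add: of_nat_diff)
    finally show ?thesis using False by simp
  qed
  finally show ?thesis .
qed

lemma L2: "(fps_X ^ Suc k * fps_const (1 / fact k) * (fps_deriv ^^ k) (f :: rat fps)) $ Suc N = of_nat (N choose k) * f $ N"
proof -
  have "fps_X ^ Suc k * fps_const (1 / fact k) * (fps_deriv ^^ k) f
     = fps_X * (fps_X ^ k * fps_const (1 / fact k) * (fps_deriv ^^ k) f)"
    by (simp only: power_Suc mult.assoc)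
  then show ?thesis by (simp only: fps_X_mult_nth L0) simp
qed

lemma L3: "(fps_const c * fps_X ^ k * fps_const (1 / fact k) * (fps_deriv ^^ k) (f :: rat fps)) $ N = c * of_nat (N choose k) * f $ N"
proof -
  have "fps_const c * fps_X ^ k * fps_const (1 / fact k) * (fps_deriv ^^ k) f
     = fps_const c * (fps_X ^ k * fps_const (1 / fact k) * (fps_deriv ^^ k) f)"
    by (simp only: mult.assoc)
  then show ?thesis using L0[of k f N] by (simp only: fps_mult_left_const_nth mult.assoc)
qed

lemma Fq: "1 \<le> j \<Longrightarrow> j \<le> N \<Longrightarrow>
  (of_nat ((N - j) choose d) :: rat) = (\<Sum>k=0..d. (-1)^k * of_nat ((k + j - 1) choose (j - 1)) * of_nat (N choose (d - k)))"
proof -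
  assume j: "1 \<le> j" "j \<le> N"
  then obtain j' where jj: "j = Suc j'" by (cases j) auto
  have "int ((N - Suc j') choose d) = (\<Sum>k\<le>d. (-1)^k * int ((k + j') choose j') * int (N choose (d - k)))"
    using Fj[of j' N d] j jj by simp
  then have "(of_int (int ((N - Suc j') choose d)) :: rat) = of_int (\<Sum>k\<le>d. (-1)^k * int ((k + j') choose j') * int (N choose (d - k)))"
    by simp
  then show ?thesis by (simp add: jj atLeast0AtMost)
qed

lemma a1_0: "a 1 $ 0 = 1" by (simp add: a_nth pc_def)
lemma a2_0: "a 2 $ 0 = 0" by (simp add: a_nth pc_def)
lemma a_big_0: "i > 2 \<Longrightarrow> a i $ 0 = 0" by (simp add: a_nth pc_def)
lemma a_zero: "N + 2 < i \<Longrightarrow> a i $ N = 0" by (simp add: a_nth pc_def)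



lemma ME:
  assumes im: "i = Suc (Suc (Suc m))"
  shows "a i $ Suc N = of_nat (N choose (Suc m)) * a 1 $ N + of_nat (N choose m) * a 1 $ N
    + of_nat (N choose m) * a 2 $ N
    + (\<Sum>j=1..i-3. \<Sum>k=0..i-3-j. (-1)^k * of_nat ((k + j - 1) choose (j - 1)) * of_nat (N choose (i - 3 - j - k)) * a (j + 2) $ N)
    + (\<Sum>j=1..i. a j * a (i - j + 1)) $ N"
proof -
  define T where "T i' = of_nat ((N + 2 - i') choose (i - 1 - i')) * a i' $ N" for i'
  have r: "a i $ Suc N = (\<Sum>i'=1..i-1. T i') + (\<Sum>j=1..i. a j * a (i + 1 - j)) $ N"
    unfolding T_def by (rule rec_a)
  have s2: "(\<Sum>j=1..i. a j * a (i + 1 - j)) = (\<Sum>j=1..i. a j * a (i - j + 1))"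
    by (intro sum.cong refl) (simp add: Suc_diff_le)
  have s1: "(\<Sum>i'=1..i-1. T i') = T 1 + T 2 + (\<Sum>j=1..m. T (j + 2))"
  proof -
    have "(\<Sum>i'=1..i-1. T i') = (\<Sum>i'=1..Suc (Suc m). T i')" using im by simp
    also have "\<dots> = T 1 + (\<Sum>i'=2..Suc (Suc m). T i')"
      by (subst sum.atLeast_Suc_atMost) (simp_all add: numeral_2_eq_2)
    also have "(\<Sum>i'=2..Suc (Suc m). T i') = T 2 + (\<Sum>i'=3..Suc (Suc m). T i')"
      by (subst sum.atLeast_Suc_atMost) (simp_all add: eval_nat_numeral)
    also have "(\<Sum>i'=3..Suc (Suc m). T i') = (\<Sum>i'=1+2..m+2. T i')"
    proof -
      have "{3..Suc (Suc m)} = {1+2..m+2}" by auto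
      then show ?thesis by (simp only:)
    qed
    also have "\<dots> = (\<Sum>j=1..m. T (j + 2))" by (rule sum.shift_bounds_cl_nat_ivl)
    finally show ?thesis by (simp add: add.assoc)
  qed
  have T1: "T 1 = of_nat (N choose (Suc m)) * a 1 $ N + of_nat (N choose m) * a 1 $ N"
    using im by (simp add: T_def algebra_simps)
  have T2: "T 2 = of_nat (N choose m) * a 2 $ N"
    using im by (simp add: T_def)
  have T3: "(\<Sum>j=1..m. T (j + 2)) = (\<Sum>j=1..i-3. \<Sum>k=0..i-3-j. (-1)^k * of_nat ((k + j - 1) choose (j - 1)) * of_nat (N choose (i - 3 - j - k)) * a (j + 2) $ N)"
  proof -
    have "i - 3 = m" using im by simp
    moreover have "T (j + 2) = (\<Sum>k=0..m-j. (-1)^k * of_nat ((k + j - 1) choose (j - 1)) * of_nat (N choose (m - j - k)) * a (j + 2) $ N)"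
      if j: "j \<in> {1..m}" for j
    proof (cases "j \<le> N")
      case True
      have "T (j + 2) = of_nat ((N - j) choose (m - j)) * a (j + 2) $ N"
        using im by (simp add: T_def)
      also have "\<dots> = (\<Sum>k=0..m-j. (-1)^k * of_nat ((k + j - 1) choose (j - 1)) * of_nat (N choose (m - j - k))) * a (j + 2) $ N"
        using Fq[of j N "m - j"] j True by simp
      finally show ?thesis by (simp add: sum_distrib_right)
    next
      case False
      then show ?thesis by (simp add: T_def a_zero)
    qed
    ultimately show ?thesis by simp
  qed
  show ?thesis using r s1 s2 T1 T2 T3 by (simp add: algebra_simps)
qed



theorem theorem1:
  shows "a 1 = fps_X * (a 1)^2 + 1 \<and> fps_nth (a 1) 0 = 1
    \<and> a 2 = fps_X * a 1 + 2 * fps_X * a 1 * a 2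
    \<and> (\<forall>i>2. a i =
          fps_X ^ (i - 1) * fps_const (1 / fact (i - 2)) * (fps_deriv ^^ (i - 2)) (a 1)
        + fps_X ^ (i - 2) * fps_const (1 / fact (i - 3)) * (fps_deriv ^^ (i - 3)) (a 1)
        + fps_X ^ (i - 2) * fps_const (1 / fact (i - 3)) * (fps_deriv ^^ (i - 3)) (a 2)
        + fps_X * (\<Sum>j=1..i-3. \<Sum>k=0..i-3-j.
             fps_const ((-1) ^ k * of_nat ((k + j - 1) choose (j - 1)))
             * fps_X ^ (i - 3 - j - k)
             * fps_const (1 / fact (i - 3 - j - k))
             * (fps_deriv ^^ (i - 3 - j - k)) (a (j + 2)))
        + fps_X * (\<Sum>j=1..i. a j * a (i - j + 1)))"
proof (intro conjI allI impI)
  show A1: "a 1 = fps_X * (a 1)^2 + 1"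
  proof (rule fps_ext)
    fix n show "a 1 $ n = (fps_X * a 1 ^ 2 + 1) $ n"
    proof (cases n)
      case 0 then show ?thesis using a1_0 by simp
    next
      case (Suc N) then show ?thesis using rec_a[of 1 N] by (simp add: power2_eq_square)
    qed
  qed
  show "a 1 $ 0 = 1" by (rule a1_0)
  show "a 2 = fps_X * a 1 + 2 * fps_X * a 1 * a 2"
  proof -
    have e: "fps_X * a 1 + 2 * fps_X * a 1 * a 2 = fps_X * (a 1 + (a 1 * a 2 + a 2 * a 1))"
      by (simp only: mult_2 distrib_left distrib_right mult.assoc mult.commute[of "a 2" "a 1"])
    have s: "(\<Sum>j=1..2. a j * a (2 + 1 - j)) = a 1 * a 2 + a 2 * a 1"
      by (simp add: numeral_2_eq_2)
    show ?thesis unfolding e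
    proof (rule fps_ext)
      fix n show "a 2 $ n = (fps_X * (a 1 + (a 1 * a 2 + a 2 * a 1))) $ n"
      proof (cases n)
        case 0 then show ?thesis by (simp add: a2_0)
      next
        case (Suc N) then show ?thesis using rec_a[of 2 N] s by simp
      qed
    qed
  qed
  fix i :: nat assume "2 < i"
  define m where "m = i - 3"
  have im: "i = Suc (Suc (Suc m))" using \<open>2 < i\<close> unfolding m_def by simp
  show "a i =
          fps_X ^ (i - 1) * fps_const (1 / fact (i - 2)) * (fps_deriv ^^ (i - 2)) (a 1)
        + fps_X ^ (i - 2) * fps_const (1 / fact (i - 3)) * (fps_deriv ^^ (i - 3)) (a 1)
        + fps_X ^ (i - 2) * fps_const (1 / fact (i - 3)) * (fps_deriv ^^ (i - 3)) (a 2)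
        + fps_X * (\<Sum>j=1..i-3. \<Sum>k=0..i-3-j.
             fps_const ((-1) ^ k * of_nat ((k + j - 1) choose (j - 1)))
             * fps_X ^ (i - 3 - j - k)
             * fps_const (1 / fact (i - 3 - j - k))
             * (fps_deriv ^^ (i - 3 - j - k)) (a (j + 2)))
        + fps_X * (\<Sum>j=1..i. a j * a (i - j + 1))" (is "_ = ?R")
  proof (rule fps_ext)
    fix n show "a i $ n = ?R $ n"
    proof (cases n)
      case 0 then show ?thesis using im by (simp add: a_big_0)
    next
      case (Suc N)
      have t1: "(fps_X ^ (i - 1) * fps_const (1 / fact (i - 2)) * (fps_deriv ^^ (i - 2)) (a 1)) $ Suc N
          = of_nat (N choose (Suc m)) * a 1 $ N"
        using L2[of "Suc m" "a 1" N] im by simp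
      have t2: "(fps_X ^ (i - 2) * fps_const (1 / fact (i - 3)) * (fps_deriv ^^ (i - 3)) (a 1)) $ Suc N
          = of_nat (N choose m) * a 1 $ N"
        using L2[of m "a 1" N] im by simp
      have t3: "(fps_X ^ (i - 2) * fps_const (1 / fact (i - 3)) * (fps_deriv ^^ (i - 3)) (a 2)) $ Suc N
          = of_nat (N choose m) * a 2 $ N"
        using L2[of m "a 2" N] im by simp
      have t4: "(fps_X * (\<Sum>j=1..i-3. \<Sum>k=0..i-3-j.
             fps_const ((-1) ^ k * of_nat ((k + j - 1) choose (j - 1)))
             * fps_X ^ (i - 3 - j - k)
             * fps_const (1 / fact (i - 3 - j - k))
             * (fps_deriv ^^ (i - 3 - j - k)) (a (j + 2)))) $ Suc N
          = (\<Sum>j=1..i-3. \<Sum>k=0..i-3-j. (-1)^k * of_nat ((k + j - 1) choose (j - 1)) * of_nat (N choose (i - 3 - j - k)) * a (j + 2) $ N)"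
        by (simp only: fps_X_mult_nth fps_sum_nth L3 if_False nat.distinct) simp
      have t5: "(fps_X * (\<Sum>j=1..i. a j * a (i - j + 1))) $ Suc N = (\<Sum>j=1..i. a j * a (i - j + 1)) $ N"
        by simp
      show ?thesis unfolding Suc fps_add_nth t1 t2 t3 t4 t5 by (rule ME[OF im])
    qed
  qed
qed



end
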